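(* Let $n\ge3$, let $\mathcal{U}=[k]$ be finite, let $\{\mathbf{p}_u\}_{u\in\mathcal{U}}$ be a probability table with every $\mathbf{p}_u\in(0,1)^n$ and $\sum_ip_u^{(i)}=1$, let $d$ be a probability distribution on $\mathcal{U}$, and let $E=\{(C^{(1)},C^{(2)}),(C^{(2)},C^{(3)}),\dots,(C^{(n-1)},C^{(n)}),(C^{(n)},C^{(1)})\}$. Then there exists a probability distribution $w$ on the set $\mathcal{R}$ of permutations of $[n]$ such that $f_d(e)=\sum_{r\in\mathcal{R}}w(r)f_r(e)$ for every $e\in E$.
   Context: $f_d(C^{(i)},C^{(j)})=\sum_u d(u)\,p_u^{(i)}/(p_u^{(i)}+p_u^{(j)})$ are the expert graph weights (here an expert cycle on $E$). For a permutation $r=(r_1,\dots,r_n)$, $f_r(C^{(r_a)},C^{(r_b)})=1$ if $a<b$ and $0$ if $a>b$ (ranking graph weights). *)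

theory Defs
  imports Complex_Main "HOL-Combinatorics.Permutations"
begin

text \<open>Candidates are C^(1),...,C^(n), identified with 1..n. Voter types U = {1..k}.
  p u i = p_u^(i), d u = d(u).\<close>

definition expert_weight :: "nat set \<Rightarrow> (nat \<Rightarrow> real) \<Rightarrow> (nat \<Rightarrow> nat \<Rightarrow> real) \<Rightarrow> nat \<Rightarrow> nat \<Rightarrow> real" where
  "expert_weight U d p i j = (\<Sum>u\<in>U. d u * p u i / (p u i + p u j))"

text \<open>A ranking r = (r_1,...,r_n) is a permutation r of {1..n}, with r a = r_a the
  candidate in position a. f_r(C^(r_a), C^(r_b)) = 1 iff a < b, i.e. candidate i
  precedes candidate j iff inv r i < inv r j.\<close>

definition rank_weight :: "(nat \<Rightarrow> nat) \<Rightarrow> nat \<Rightarrow> nat \<Rightarrow> real" where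
  "rank_weight r i j = (if inv r i < inv r j then 1 else 0)"

definition cycle_edges :: "nat \<Rightarrow> (nat \<times> nat) set" where
  "cycle_edges n = {(i, Suc i) | i. 1 \<le> i \<and> i < n} \<union> {(n, 1)}"

end

theory Submission
  imports Defs "HOL-Combinatorics.Multiset_Permutations"
begin

fun PL :: "(nat \<Rightarrow> real) \<Rightarrow> nat list \<Rightarrow> real" where
  "PL p [] = 1"
| "PL p (x # xs) = p x / (p x + sum_list (map p xs)) * PL p xs"

fun bef :: "nat list \<Rightarrow> nat \<Rightarrow> nat \<Rightarrow> real" where
  "bef [] i j = 0"
| "bef (x # xs) i j = (if x = i then 1 else if x = j then 0 else bef xs i j)"

lemma PL_nonneg: "(\<forall>x\<in>set xs. p x > 0) \<Longrightarrow> PL p xs \<ge> 0"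
proof (induction xs)
  case Nil then show ?case by simp
next
  case (Cons x xs)
  have "sum_list (map p xs) \<ge> 0" using Cons.prems by (intro sum_list_nonneg) auto
  then show ?case using Cons by (auto intro!: mult_nonneg_nonneg divide_nonneg_pos)
qed

lemma sum_pos_split:
  assumes "finite A" "A \<noteq> {}"
  shows "(\<Sum>xs\<in>permutations_of_set A. f xs) = (\<Sum>x\<in>A. \<Sum>ys\<in>permutations_of_set (A - {x}). f (x # ys))"
proof -
  have "(\<Sum>xs\<in>permutations_of_set A. f xs) = (\<Sum>x\<in>A. \<Sum>xs\<in>(#) x ` permutations_of_set (A - {x}). f xs)"
    unfolding permutations_of_set_nonempty[OF assms(2)]
    by (rule sum.UNION_disjoint) (auto simp: assms)
  also have "\<dots> = (\<Sum>x\<in>A. \<Sum>ys\<in>permutations_of_set (A - {x}). f (x # ys))"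
    by (rule sum.cong[OF refl]) (simp add: sum.reindex inj_on_def)
  finally show ?thesis .
qed

lemma sumlist_pos: "ys \<in> permutations_of_set B \<Longrightarrow> sum_list (map p ys) = sum p B"
  by (auto simp: permutations_of_set_def sum_list_distinct_conv_sum_set)

lemma PL_sum:
  "finite A \<Longrightarrow> (\<forall>x\<in>A. p x > 0) \<Longrightarrow> (\<Sum>xs\<in>permutations_of_set A. PL p xs) = 1"
proof (induction "card A" arbitrary: A)
  case 0 then show ?case by simp
next
  case (Suc m)
  then have ne: "A \<noteq> {}" by auto
  have S: "sum p A > 0" using Suc.prems ne by (intro sum_pos) auto
  have "(\<Sum>xs\<in>permutations_of_set A. PL p xs)
      = (\<Sum>x\<in>A. \<Sum>ys\<in>permutations_of_set (A - {x}). PL p (x # ys))"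
    by (rule sum_pos_split[OF Suc.prems(1) ne])
  also have "\<dots> = (\<Sum>x\<in>A. p x / sum p A * (\<Sum>ys\<in>permutations_of_set (A - {x}). PL p ys))"
  proof (intro sum.cong refl)
    fix x assume x: "x \<in> A"
    have "(\<Sum>ys\<in>permutations_of_set (A - {x}). PL p (x # ys))
        = (\<Sum>ys\<in>permutations_of_set (A - {x}). p x / sum p A * PL p ys)"
    proof (intro sum.cong refl)
      fix ys assume "ys \<in> permutations_of_set (A - {x})"
      then have "p x + sum_list (map p ys) = sum p A"
        using sumlist_pos[of ys "A - {x}" p] sum.remove[OF Suc.prems(1) x, of p] by simp
      then show "PL p (x # ys) = p x / sum p A * PL p ys" by simp
    qed
    then show "(\<Sum>ys\<in>permutations_of_set (A - {x}). PL p (x # ys))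
        = p x / sum p A * (\<Sum>ys\<in>permutations_of_set (A - {x}). PL p ys)"
      by (simp add: sum_distrib_left)
  qed
  also have "\<dots> = (\<Sum>x\<in>A. p x / sum p A)"
  proof (intro sum.cong refl)
    fix x assume x: "x \<in> A"
    have "(\<Sum>ys\<in>permutations_of_set (A - {x}). PL p ys) = 1"
      using Suc x by (intro Suc.hyps) auto
    then show "p x / sum p A * (\<Sum>ys\<in>permutations_of_set (A - {x}). PL p ys) = p x / sum p A" by simp
  qed
  also have "\<dots> = 1" using S by (simp add: sum_divide_distrib[symmetric])
  finally show ?case .
qed

lemma PL_bef:
  "finite A \<Longrightarrow> (\<forall>x\<in>A. p x > 0) \<Longrightarrow> i \<in> A \<Longrightarrow> j \<in> A \<Longrightarrow> i \<noteq> j \<Longrightarrow>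
   (\<Sum>xs\<in>permutations_of_set A. PL p xs * bef xs i j) = p i / (p i + p j)"
proof (induction "card A" arbitrary: A)
  case 0 then show ?case by simp
next
  case (Suc m)
  then have ne: "A \<noteq> {}" by auto
  have S: "sum p A > 0" using Suc.prems ne by (intro sum_pos) auto
  define q where "q = p i / (p i + p j)"
  have pij: "p i + p j > 0" using Suc.prems by (simp add: add_pos_pos)
  define g where "g x = (if x = i then 1 else if x = j then 0 else q)" for x
  have "(\<Sum>xs\<in>permutations_of_set A. PL p xs * bef xs i j)
      = (\<Sum>x\<in>A. \<Sum>ys\<in>permutations_of_set (A - {x}). PL p (x # ys) * bef (x # ys) i j)"
    by (rule sum_pos_split[OF Suc.prems(1) ne])
  also have "\<dots> = (\<Sum>x\<in>A. p x / sum p A * g x)"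
  proof (intro sum.cong refl)
    fix x assume x: "x \<in> A"
    have "(\<Sum>ys\<in>permutations_of_set (A - {x}). PL p (x # ys) * bef (x # ys) i j)
        = (\<Sum>ys\<in>permutations_of_set (A - {x}). p x / sum p A * (PL p ys * bef (x # ys) i j))"
    proof (intro sum.cong refl)
      fix ys assume "ys \<in> permutations_of_set (A - {x})"
      then have "p x + sum_list (map p ys) = sum p A"
        using sumlist_pos[of ys "A - {x}" p] sum.remove[OF Suc.prems(1) x, of p] by simp
      then show "PL p (x # ys) * bef (x # ys) i j = p x / sum p A * (PL p ys * bef (x # ys) i j)" by simp
    qed
    also have "\<dots> = p x / sum p A * (\<Sum>ys\<in>permutations_of_set (A - {x}). PL p ys * bef (x # ys) i j)"
      by (simp add: sum_distrib_left)
    also have "(\<Sum>ys\<in>permutations_of_set (A - {x}). PL p ys * bef (x # ys) i j) = g x"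
    proof (cases "x = i \<or> x = j")
      case True
      have "(\<Sum>ys\<in>permutations_of_set (A - {x}). PL p ys) = 1"
        using Suc.prems by (intro PL_sum) auto
      then show ?thesis using True Suc.prems(5) by (auto simp: g_def)
    next
      case False
      have "(\<Sum>ys\<in>permutations_of_set (A - {x}). PL p ys * bef ys i j) = p i / (p i + p j)"
        using Suc x False by (intro Suc.hyps) auto
      then show ?thesis using False by (simp add: g_def q_def)
    qed
    finally show "(\<Sum>ys\<in>permutations_of_set (A - {x}). PL p (x # ys) * bef (x # ys) i j) = p x / sum p A * g x" .
  qed
  also have "\<dots> = (\<Sum>x\<in>A. p x / sum p A * q + (if x = i then p i / sum p A * (1 - q) else 0)
                      + (if x = j then - (p j / sum p A * q) else 0))"
    using S Suc.prems(5) by (intro sum.cong refl) (auto simp: g_def field_simps)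
  also have "\<dots> = q + p i / sum p A * (1 - q) - p j / sum p A * q"
    using Suc.prems S
    by (simp add: sum.distrib sum_divide_distrib[symmetric] sum_distrib_right[symmetric])
  also have "\<dots> = q" using pij S by (simp add: q_def field_simps)
  finally show ?case by (simp add: q_def)
qed

lemma bef_nth:
  "distinct xs \<Longrightarrow> a < length xs \<Longrightarrow> b < length xs \<Longrightarrow> a \<noteq> b \<Longrightarrow>
   bef xs (xs ! a) (xs ! b) = (if a < b then 1 else 0)"
proof (induction xs arbitrary: a b)
  case Nil then show ?case by simp
next
  case (Cons x xs)
  show ?case
  proof (cases a)
    case 0 then show ?thesis using Cons.prems by auto
  next
    case (Suc a')
    show ?thesis
    proof (cases b)
      case 0
      have "xs ! a' \<noteq> x" using Cons.prems Suc by (auto simp: nth_mem)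
      then show ?thesis using 0 Suc by auto
    next
      case (Suc b')
      have "xs ! a' \<noteq> x" "xs ! b' \<noteq> x" using Cons.prems Suc \<open>a = Suc a'\<close> by (auto simp: nth_mem)
      then show ?thesis using Cons.IH[of a' b'] Cons.prems Suc \<open>a = Suc a'\<close> by auto
    qed
  qed
qed

lemma bij_perm_list:
  "bij_betw (\<lambda>r. map r [1..<Suc n]) {r. r permutes {1..n}} (permutations_of_set {1..n})"
proof -
  let ?h = "\<lambda>r. map r [1..<Suc n]"
  let ?S = "{r. r permutes {1..n}}"
  have inj: "inj_on ?h ?S"
  proof (rule inj_onI)
    fix r r' assume r: "r \<in> ?S" and r': "r' \<in> ?S" and eq: "?h r = ?h r'"
    have "\<forall>i\<in>set [1..<Suc n]. r i = r' i" using eq by (simp only: map_eq_conv)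
    then have "\<forall>i\<in>{1..n}. r i = r' i" by (simp only: set_upt atLeastLessThanSuc_atLeastAtMost)
    moreover have "\<forall>i. i \<notin> {1..n} \<longrightarrow> r i = i \<and> r' i = i" using r r' by (auto simp: permutes_not_in)
    ultimately show "r = r'" by (metis ext)
  qed
  have sub: "?h ` ?S \<subseteq> permutations_of_set {1..n}"
  proof
    fix xs assume "xs \<in> ?h ` ?S"
    then obtain r where r: "r permutes {1..n}" and xs: "xs = ?h r" by auto
    have "set xs = {1..n}" using xs permutes_image[OF r] by (simp add: atLeastLessThanSuc_atLeastAtMost del: upt_Suc)
    moreover have "distinct xs" using xs permutes_inj_on[OF r] by (simp add: distinct_map inj_on_subset)
    ultimately show "xs \<in> permutations_of_set {1..n}" by auto
  qed
  have "card (?h ` ?S) = card ?S" using inj by (rule card_image)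
  also have "\<dots> = fact n" by (rule card_permutations) auto
  also have "\<dots> = card (permutations_of_set {1..n})" by simp
  finally have "?h ` ?S = permutations_of_set {1..n}"
    using sub by (intro card_subset_eq) auto
  then show ?thesis using inj by (simp add: bij_betw_def)
qed

lemma transfer_sum:
  "(\<Sum>r\<in>{r. r permutes {1..n}}. f (map r [1..<Suc n])) = (\<Sum>xs\<in>permutations_of_set {1..n}. f xs)"
  by (rule sum.reindex_bij_betw[OF bij_perm_list])

lemma rank_bef:
  assumes r: "r permutes {1..n}" and i: "i \<in> {1..n}" and j: "j \<in> {1..n}" and ij: "i \<noteq> j"
  shows "rank_weight r i j = bef (map r [1..<Suc n]) i j"
proof -
  let ?xs = "map r [1..<Suc n]"
  have ii: "inv r i \<in> {1..n}" "inv r j \<in> {1..n}"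
    using permutes_in_image[OF permutes_inv[OF r]] i j by auto
  have ri: "r (inv r i) = i" "r (inv r j) = j" using r by (auto simp: permutes_inverses)
  have xi: "?xs ! (inv r i - 1) = i" "?xs ! (inv r j - 1) = j" using ii ri by (auto simp: nth_map simp del: upt_Suc)
  have d: "distinct ?xs" using permutes_inj_on[OF r] by (simp add: distinct_map inj_on_subset)
  have ne: "inv r i - 1 \<noteq> inv r j - 1" using xi ij by metis
  have "bef ?xs (?xs ! (inv r i - 1)) (?xs ! (inv r j - 1)) = (if inv r i - 1 < inv r j - 1 then 1 else 0)"
    using ne ii by (intro bef_nth[OF d]) (auto simp del: upt_Suc)
  then have "bef ?xs i j = (if inv r i - 1 < inv r j - 1 then 1 else 0)"
    by (simp only: xi)
  then show ?thesis using ii by (auto simp: rank_weight_def)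
qed

theorem lemma16:
  fixes n k :: nat and p :: "nat \<Rightarrow> nat \<Rightarrow> real" and d :: "nat \<Rightarrow> real"
  assumes n3: "n \<ge> 3"
    and p_pos: "\<And>u i. u \<in> {1..k} \<Longrightarrow> i \<in> {1..n} \<Longrightarrow> 0 < p u i \<and> p u i < 1"
    and p_sum: "\<And>u. u \<in> {1..k} \<Longrightarrow> (\<Sum>i=1..n. p u i) = 1"
    and d_nonneg: "\<And>u. u \<in> {1..k} \<Longrightarrow> d u \<ge> 0"
    and d_sum: "(\<Sum>u=1..k. d u) = 1"
  shows "\<exists>w :: (nat \<Rightarrow> nat) \<Rightarrow> real.
           (\<forall>r \<in> {r. r permutes {1..n}}. w r \<ge> 0)
         \<and> (\<Sum>r \<in> {r. r permutes {1..n}}. w r) = 1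
         \<and> (\<forall>(i, j) \<in> cycle_edges n.
              expert_weight {1..k} d p i j
                = (\<Sum>r \<in> {r. r permutes {1..n}}. w r * rank_weight r i j))"
proof -
  define w where "w r = (\<Sum>u\<in>{1..k}. d u * PL (p u) (map r [1..<Suc n]))" for r
  let ?S = "{r. r permutes {1..n}}"
  have pp: "\<forall>x\<in>{1..n}. p u x > 0" if "u \<in> {1..k}" for u using p_pos that by auto
  have "\<forall>r \<in> ?S. w r \<ge> 0"
  proof
    fix r assume r: "r \<in> ?S"
    have "\<forall>x\<in>set (map r [1..<Suc n]). p u x > 0" if "u \<in> {1..k}" for u
      using pp[OF that] permutes_in_image[of r "{1..n}"] r by auto
    then show "w r \<ge> 0" unfolding w_def
      by (intro sum_nonneg mult_nonneg_nonneg d_nonneg PL_nonneg) auto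
  qed
  moreover have "(\<Sum>r \<in> ?S. w r) = 1"
  proof -
    have "(\<Sum>r \<in> ?S. w r) = (\<Sum>u\<in>{1..k}. d u * (\<Sum>r \<in> ?S. PL (p u) (map r [1..<Suc n])))"
      unfolding w_def by (subst sum.swap) (simp add: sum_distrib_left)
    also have "\<dots> = (\<Sum>u\<in>{1..k}. d u)"
    proof (intro sum.cong refl)
      fix u assume u: "u \<in> {1..k}"
      have "(\<Sum>r \<in> ?S. PL (p u) (map r [1..<Suc n])) = (\<Sum>xs\<in>permutations_of_set {1..n}. PL (p u) xs)"
        by (rule transfer_sum)
      also have "\<dots> = 1" using pp[OF u] by (intro PL_sum) auto
      finally show "d u * (\<Sum>r \<in> ?S. PL (p u) (map r [1..<Suc n])) = d u" by simp
    qed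
    finally show ?thesis using d_sum by simp
  qed
  moreover have "\<forall>(i, j) \<in> cycle_edges n.
              expert_weight {1..k} d p i j = (\<Sum>r \<in> ?S. w r * rank_weight r i j)"
  proof (intro ballI, clarify)
    fix i j assume e: "(i, j) \<in> cycle_edges n"
    have i: "i \<in> {1..n}" and j: "j \<in> {1..n}" and ij: "i \<noteq> j"
      using e n3 by (auto simp: cycle_edges_def)
    have "(\<Sum>r \<in> ?S. w r * rank_weight r i j)
        = (\<Sum>u\<in>{1..k}. d u * (\<Sum>r \<in> ?S. PL (p u) (map r [1..<Suc n]) * bef (map r [1..<Suc n]) i j))"
    proof -
      have "(\<Sum>r \<in> ?S. w r * rank_weight r i j)
          = (\<Sum>r \<in> ?S. \<Sum>u\<in>{1..k}. d u * (PL (p u) (map r [1..<Suc n]) * bef (map r [1..<Suc n]) i j))"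
      proof (intro sum.cong refl)
        fix r assume "r \<in> ?S"
        then have "rank_weight r i j = bef (map r [1..<Suc n]) i j" using rank_bef i j ij by auto
        then show "w r * rank_weight r i j = (\<Sum>u\<in>{1..k}. d u * (PL (p u) (map r [1..<Suc n]) * bef (map r [1..<Suc n]) i j))"
          unfolding w_def sum_distrib_right by (simp add: mult.assoc del: upt_Suc)
      qed
      also have "\<dots> = (\<Sum>u\<in>{1..k}. \<Sum>r \<in> ?S. d u * (PL (p u) (map r [1..<Suc n]) * bef (map r [1..<Suc n]) i j))"
        by (rule sum.swap)
      also have "\<dots> = (\<Sum>u\<in>{1..k}. d u * (\<Sum>r \<in> ?S. PL (p u) (map r [1..<Suc n]) * bef (map r [1..<Suc n]) i j))"
        by (simp only: sum_distrib_left)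
      finally show ?thesis .
    qed
    also have "\<dots> = (\<Sum>u\<in>{1..k}. d u * (p u i / (p u i + p u j)))"
    proof (intro sum.cong refl)
      fix u assume u: "u \<in> {1..k}"
      have "(\<Sum>r \<in> ?S. PL (p u) (map r [1..<Suc n]) * bef (map r [1..<Suc n]) i j)
          = (\<Sum>xs\<in>permutations_of_set {1..n}. PL (p u) xs * bef xs i j)"
        by (rule transfer_sum[where f = "\<lambda>xs. PL (p u) xs * bef xs i j"])
      also have "\<dots> = p u i / (p u i + p u j)" using pp[OF u] i j ij by (intro PL_bef) auto
      finally show "d u * (\<Sum>r \<in> ?S. PL (p u) (map r [1..<Suc n]) * bef (map r [1..<Suc n]) i j)
          = d u * (p u i / (p u i + p u j))" by simp
    qed
    finally show "expert_weight {1..k} d p i j = (\<Sum>r \<in> ?S. w r * rank_weight r i j)"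
      by (simp add: expert_weight_def)
  qed
  ultimately show ?thesis by blast
qed

end
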